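(* Let $\Sigma$ be an alphabet with at least three letters. If $f$ and $g$ are unary congruence preserving functions $\mathcal{T}(\Sigma)\to\mathcal{T}(\Sigma)$ such that $f(a)=g(a)$ for all $a\in\Sigma$, then for all $t\in\mathcal{T}(\Sigma)$, $f(t)$ and $g(t)$ are similar.
   Context: Let $\Sigma$ be an alphabet not containing $0,1$. A binary tree over $\Sigma$ is a finite set $t \subseteq \{0,1\}^*\Sigma$ such that for any $ua, vb \in t$ with $ua \neq vb$, $u$ is not a prefix of $v$ and $v$ is not a prefix of $u$; $\mathcal{T}(\Sigma)$ is the set of such trees, $\mathbf 0=\emptyset$, each letter $a$ is identified with $\{a\}$, and $t\star t' = 0.t\cup 1.t'$. A congruence is an equivalence relation on $\mathcal{T}(\Sigma)$ compatible with $\star$. A function $f\colon\mathcal{T}(\Sigma)\to\mathcal{T}(\Sigma)$ is congruence preserving if for every congruence $\sim$, $t\sim t'$ implies $f(t)\sim f(t')$. Every map $\Sigma\to\mathcal{T}(\Sigma)$ extends uniquely to an endomorphism of $\langle\mathcal{T}(\Sigma),\star\rangle$. For $a\in\Sigma$, $\nu_a$ is the endomorphism sending every letter to $a$; $t,t'$ are similar if $\nu_a(t)=\nu_a(t')$ for some (equivalently every) $a\in\Sigma$. *)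

theory Defs
  imports Main "HOL-Library.Sublist"
begin

text \<open>A word in {0,1}^* Sigma is a pair
  (u, a) with u a list of booleans (False = 0, True = 1) and a a letter.\<close>

definition is_btree :: "(bool list \<times> 'a) set \<Rightarrow> bool" where
  "is_btree t \<longleftrightarrow> finite t \<and>
     (\<forall>u a v b. (u, a) \<in> t \<longrightarrow> (v, b) \<in> t \<longrightarrow> (u, a) \<noteq> (v, b) \<longrightarrow>
        \<not> prefix u v \<and> \<not> prefix v u)"

typedef 'a btree = "{t :: (bool list \<times> 'a) set. is_btree t}"
  by (rule exI[of _ "{}"]) (simp add: is_btree_def)

definition bt_zero :: "'a btree" where
  "bt_zero = Abs_btree {}"

definition bt_letter :: "'a \<Rightarrow> 'a btree" where
  "bt_letter a = Abs_btree {([], a)}"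

definition bt_star :: "'a btree \<Rightarrow> 'a btree \<Rightarrow> 'a btree" where
  "bt_star t t' = Abs_btree ((\<lambda>(u, a). (False # u, a)) ` Rep_btree t \<union>
                             (\<lambda>(u, a). (True # u, a)) ` Rep_btree t')"

definition congruence :: "('a btree \<Rightarrow> 'a btree \<Rightarrow> bool) \<Rightarrow> bool" where
  "congruence R \<longleftrightarrow> equivp R \<and>
     (\<forall>t1 t1' t2 t2'. R t1 t1' \<longrightarrow> R t2 t2' \<longrightarrow> R (bt_star t1 t2) (bt_star t1' t2'))"

definition congruence_preserving :: "('a btree \<Rightarrow> 'a btree) \<Rightarrow> bool" where
  "congruence_preserving f \<longleftrightarrow>
     (\<forall>R. congruence R \<longrightarrow> (\<forall>t t'. R t t' \<longrightarrow> R (f t) (f t')))"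

definition nu :: "'a \<Rightarrow> 'a btree \<Rightarrow> 'a btree" where
  "nu a t = Abs_btree ((\<lambda>(u, b). (u, a)) ` Rep_btree t)"

definition similar :: "'a btree \<Rightarrow> 'a btree \<Rightarrow> bool" where
  "similar t t' \<longleftrightarrow> (\<exists>a. nu a t = nu a t')"

end

theory Submission
  imports Defs
begin

definition star0 :: "(bool list \<times> 'a) set \<Rightarrow> (bool list \<times> 'a) set \<Rightarrow> (bool list \<times> 'a) set" where
  "star0 A B = (\<lambda>(u, a). (False # u, a)) ` A \<union> (\<lambda>(u, a). (True # u, a)) ` B"

definition nu0 :: "'a \<Rightarrow> (bool list \<times> 'a) set \<Rightarrow> (bool list \<times> 'a) set" where
  "nu0 x A = (\<lambda>(u, b). (u, x)) ` A"

definition sub0 :: "'a \<Rightarrow> (bool list \<times> 'a) set \<Rightarrow> (bool list \<times> 'a) set \<Rightarrow> (bool list \<times> 'a) set" where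
  "sub0 c T S = {p \<in> S. snd p \<noteq> c} \<union> {(w @ w', y) | w w' y. (w, c) \<in> S \<and> (w', y) \<in> T}"

lemma is_btree_star0:
  assumes "is_btree A" "is_btree B"
  shows "is_btree (star0 A B)"
  using assms unfolding is_btree_def star0_def
  apply (intro conjI)
  apply simp
  apply (intro allI impI)
  apply (elim UnE imageE)
  apply (auto split: prod.splits)
  done

lemma Rep_star: "Rep_btree (bt_star s s') = star0 (Rep_btree s) (Rep_btree s')"
  unfolding bt_star_def star0_def[symmetric]
  by (rule Abs_btree_inverse) (simp add: is_btree_star0 Rep_btree[simplified])

lemma Rep_letter: "Rep_btree (bt_letter c) = {([], c)}"
  unfolding bt_letter_def by (rule Abs_btree_inverse) (simp add: is_btree_def)

lemma is_btree_nu0: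
  assumes "is_btree A"
  shows "is_btree (nu0 x A)"
  using assms unfolding is_btree_def nu0_def by fastforce

lemma Rep_nu: "Rep_btree (nu x t) = nu0 x (Rep_btree t)"
  unfolding nu_def nu0_def[symmetric]
  by (rule Abs_btree_inverse) (simp add: is_btree_nu0 Rep_btree[simplified])

lemma nu0_star: "nu0 x (star0 A B) = star0 (nu0 x A) (nu0 x B)"
  unfolding nu0_def star0_def by (auto simp: image_iff)

lemma nu0_nu0: "nu0 x (nu0 x A) = nu0 x A"
  unfolding nu0_def by (auto simp: image_iff)

lemma mem_star0: "(w,d) \<in> star0 A B \<longleftrightarrow> (case w of [] \<Rightarrow> False | b#u \<Rightarrow> if b then (u,d)\<in>B else (u,d)\<in>A)"
proof (cases w)
  case Nil then show ?thesis unfolding star0_def by auto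
next
  case (Cons b u)
  have 1: "(False # u, d) \<in> (\<lambda>(u, a). (False # u, a)) ` A \<longleftrightarrow> (u,d) \<in> A" by force
  have 2: "(True # u, d) \<in> (\<lambda>(u, a). (True # u, a)) ` B \<longleftrightarrow> (u,d) \<in> B" by force
  show ?thesis using 1 2 unfolding Cons star0_def by (cases b) auto
qed

lemma mem_sub0: "(w,d) \<in> sub0 c T S \<longleftrightarrow> ((w,d)\<in>S \<and> d\<noteq>c) \<or> (\<exists>w0 w'. w = w0@w' \<and> (w0,c)\<in>S \<and> (w',d)\<in>T)"
  unfolding sub0_def by auto

lemma star0_simps [simp]:
  "([], d) \<notin> star0 A B"
  "(False # u, d) \<in> star0 A B \<longleftrightarrow> (u, d) \<in> A"
  "(True # u, d) \<in> star0 A B \<longleftrightarrow> (u, d) \<in> B"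
  using mem_star0[of "[]" d A B] mem_star0[of "False # u" d A B] mem_star0[of "True # u" d A B]
  by simp_all

lemma ex_star0:
  "(\<exists>w0 w'. b # u = w0 @ w' \<and> (w0, c) \<in> star0 A B \<and> P w') \<longleftrightarrow>
   (\<exists>w0 w'. u = w0 @ w' \<and> (w0, c) \<in> (if b then B else A) \<and> P w')"
proof
  assume "\<exists>w0 w'. b # u = w0 @ w' \<and> (w0, c) \<in> star0 A B \<and> P w'"
  then obtain w0 w' where h: "b # u = w0 @ w'" "(w0, c) \<in> star0 A B" "P w'" by blast
  then obtain w1 where "w0 = b # w1" "u = w1 @ w'"
    by (cases w0) auto
  then show "\<exists>w0 w'. u = w0 @ w' \<and> (w0, c) \<in> (if b then B else A) \<and> P w'"
    using h by (cases b) auto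
next
  assume "\<exists>w0 w'. u = w0 @ w' \<and> (w0, c) \<in> (if b then B else A) \<and> P w'"
  then obtain w0 w' where h: "u = w0 @ w'" "(w0, c) \<in> (if b then B else A)" "P w'" by blast
  then have "b # u = (b # w0) @ w' \<and> (b # w0, c) \<in> star0 A B \<and> P w'"
    by (cases b) auto
  then show "\<exists>w0 w'. b # u = w0 @ w' \<and> (w0, c) \<in> star0 A B \<and> P w'" by blast
qed

lemma sub0_star: "sub0 c T (star0 A B) = star0 (sub0 c T A) (sub0 c T B)"
proof (rule set_eqI)
  fix p :: "bool list \<times> 'a"
  obtain w d where p: "p = (w,d)" by (cases p)
  show "p \<in> sub0 c T (star0 A B) \<longleftrightarrow> p \<in> star0 (sub0 c T A) (sub0 c T B)"
  proof (cases w)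
    case Nil then show ?thesis unfolding p mem_sub0 by simp
  next
    case (Cons b u)
    show ?thesis unfolding p mem_sub0 Cons ex_star0[where P="\<lambda>w'. (w', d) \<in> T"]
      by (cases b) (simp_all add: mem_sub0)
  qed
qed

lemma sub0_letter: "sub0 c T {([], c)} = T"
  unfolding sub0_def by auto

lemma sub0_noc: "\<forall>p\<in>T. snd p \<noteq> c \<Longrightarrow> sub0 c T T = T"
  unfolding sub0_def by auto

lemma kernel_cong:
  assumes "\<And>A B. \<phi> (star0 A B) = star0 (\<phi> A) (\<phi> B)"
  shows "congruence (\<lambda>s s'. \<phi> (Rep_btree s) = \<phi> (Rep_btree s'))"
  unfolding congruence_def
proof (intro conjI allI impI)
  show "equivp (\<lambda>s s'. \<phi> (Rep_btree s) = \<phi> (Rep_btree s'))"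
    by (intro equivpI reflpI sympI transpI) auto
next
  fix t1 t1' t2 t2'
  assume "\<phi> (Rep_btree t1) = \<phi> (Rep_btree t1')" "\<phi> (Rep_btree t2) = \<phi> (Rep_btree t2')"
  then show "\<phi> (Rep_btree (bt_star t1 t2)) = \<phi> (Rep_btree (bt_star t1' t2'))"
    by (simp add: Rep_star assms)
qed

lemma cp_apply:
  assumes "congruence_preserving f"
    and "\<And>A B. \<phi> (star0 A B) = star0 (\<phi> A) (\<phi> B)"
    and "\<phi> (Rep_btree t) = \<phi> (Rep_btree t')"
  shows "\<phi> (Rep_btree (f t)) = \<phi> (Rep_btree (f t'))"
  using assms kernel_cong[of \<phi>] unfolding congruence_preserving_def by blast

lemma sub0_inj_sub:
  assumes "sub0 a T U = sub0 a T V" "sub0 b T U = sub0 b T V"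
    and "a \<noteq> b" "a \<noteq> x" "b \<noteq> x" "\<forall>p\<in>T. snd p = x"
    and "is_btree U" and bV: "is_btree V"
  shows "V \<subseteq> U"
proof
  fix p assume pV: "p \<in> V"
  obtain w d where p: "p = (w, d)" by (cases p)
  show "p \<in> U"
  proof (cases "d = x")
    case False
    show ?thesis
    proof (cases "d = a")
      case True
      then have "p \<in> sub0 b T V" using pV p assms(3) unfolding sub0_def by auto
      then have "p \<in> sub0 b T U" using assms(2) by simp
      then show ?thesis using p True False assms(6) unfolding sub0_def by auto
    next
      case False2: False
      then have "p \<in> sub0 a T V" using pV p unfolding sub0_def by auto
      then have "p \<in> sub0 a T U" using assms(1) by simp
      then show ?thesis using p False assms(6) unfolding sub0_def by auto
    qed
  next
    case True
    then have "p \<in> sub0 a T V" using pV p assms(4) unfolding sub0_def by auto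
    then have "p \<in> sub0 a T U" using assms(1) by simp
    then consider "p \<in> U" | w0 w' y where "p = (w0 @ w', y)" "(w0, a) \<in> U" "(w', y) \<in> T"
      unfolding sub0_def by auto
    then show ?thesis
    proof cases
      case 1 then show ?thesis .
    next
      case 2
      have "(w0, a) \<in> sub0 b T U" using 2 assms(3) unfolding sub0_def by auto
      then have "(w0, a) \<in> sub0 b T V" using assms(2) by simp
      then have "(w0, a) \<in> V" using assms(4,6) unfolding sub0_def by auto
      have pre: "prefix w0 (w0 @ w')" by simp
      have "(w0 @ w', x) \<in> V" using 2 pV p True by simp
      then have False using pre \<open>(w0, a) \<in> V\<close> assms(4) bV unfolding is_btree_def by blast
      then show ?thesis ..
    qed
  qed
qed

theorem mainTheorem3:
  fixes f g :: "'a btree \<Rightarrow> 'a btree"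
  assumes "finite (UNIV :: 'a set)"
    and "card (UNIV :: 'a set) \<ge> 3"
    and "congruence_preserving f"
    and "congruence_preserving g"
    and "\<forall>a. f (bt_letter a) = g (bt_letter a)"
  shows "\<forall>t. similar (f t) (g t)"
proof
  fix t
  obtain x a b :: 'a where dist: "a \<noteq> b" "a \<noteq> x" "b \<noteq> x"
  proof -
    have "3 \<le> card (UNIV :: 'a set)" by fact
    then obtain S :: "'a set" where "card S = 3" by (meson obtain_subset_with_card_n)
    then show ?thesis using that by (auto simp: card_Suc_eq numeral_3_eq_3)
  qed
  define t' where "t' = nu x t"
  define T where "T = Rep_btree t'"
  have T: "T = nu0 x (Rep_btree t)" unfolding T_def t'_def Rep_nu ..
  have Tx: "\<forall>p\<in>T. snd p = x" unfolding T nu0_def by auto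
  have simt: "nu0 x (Rep_btree t) = nu0 x (Rep_btree t')"
    unfolding t'_def Rep_nu nu0_nu0 ..
  have sf: "nu0 x (Rep_btree (f t)) = nu0 x (Rep_btree (f t'))"
    by (rule cp_apply[OF assms(3) nu0_star simt])
  have sg: "nu0 x (Rep_btree (g t)) = nu0 x (Rep_btree (g t'))"
    by (rule cp_apply[OF assms(4) nu0_star simt])
  have key: "sub0 c T (Rep_btree (f t')) = sub0 c T (Rep_btree (g t'))" if "c \<noteq> x" for c
  proof -
    have e: "sub0 c T (Rep_btree (bt_letter c)) = sub0 c T (Rep_btree t')"
      unfolding Rep_letter sub0_letter T_def[symmetric]
      using Tx that by (simp add: sub0_noc)
    have "sub0 c T (Rep_btree (f (bt_letter c))) = sub0 c T (Rep_btree (f t'))"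
      by (rule cp_apply[OF assms(3) sub0_star e])
    moreover have "sub0 c T (Rep_btree (g (bt_letter c))) = sub0 c T (Rep_btree (g t'))"
      by (rule cp_apply[OF assms(4) sub0_star e])
    ultimately show ?thesis using assms(5) by simp
  qed
  have bt: "is_btree (Rep_btree s)" for s using Rep_btree by auto
  have "Rep_btree (f t') = Rep_btree (g t')"
    using sub0_inj_sub[OF key[OF dist(2)] key[OF dist(3)] dist Tx bt bt]
      sub0_inj_sub[OF key[OF dist(2), symmetric] key[OF dist(3), symmetric] dist Tx bt bt]
    by blast
  then have "nu0 x (Rep_btree (f t)) = nu0 x (Rep_btree (g t))" using sf sg by simp
  then have "nu x (f t) = nu x (g t)" unfolding nu_def nu0_def by simp
  then show "similar (f t) (g t)" unfolding similar_def by blast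
qed

end
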